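(* Let $d\ge1$, let $\mathcal T'$ be a finite proper subtree of the dyadic tree of $[0,1]^d$, and let $\Lambda_{\mathcal T'}$ be its set of outer leaves. Let $\mathcal B(\Lambda_{\mathcal T'})$ be the set of common boundaries of the cubes in $\Lambda_{\mathcal T'}$, i.e. the set of points belonging to (the closures of) at least two distinct cubes of $\Lambda_{\mathcal T'}$. Then its $(d-1)$-dimensional surface area satisfies $$|\mathcal B(\Lambda_{\mathcal T'})|\le 2^{d+1}d\,(\#\mathcal T')^{1/d}.$$
   Context: For $j\ge0$, the dyadic cubes of $[0,1]^d$ at scale $j$ are the $2^{jd}$ cubes $\prod_{\ell=1}^d[m_\ell2^{-j},(m_\ell+1)2^{-j}]$, $m_\ell\in\{0,\dots,2^j-1\}$. They form a tree rooted at $[0,1]^d$ whose children of a scale-$j$ cube are the $2^d$ scale-$(j+1)$ cubes contained in it. A proper subtree is a set of nodes containing the root and the parent of each of its non-root members. The outer leaves of a proper subtree $\mathcal T'$ are the cubes not in $\mathcal T'$ whose parent is in $\mathcal T'$; they form a partition of $[0,1]^d$ (up to boundaries). Surface area means $(d-1)$-dimensional Hausdorff measure. *)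

theory Defs
  imports "HOL-Analysis.Analysis"
begin

definition hausdorff_const :: "nat \<Rightarrow> real" where
  "hausdorff_const s = pi powr (real s / 2) / Gamma (real s / 2 + 1) / 2 ^ s"

text \<open>Contribution of one covering set: the empty set contributes 0 (the usual
  convention diam(empty)^s = 0, also for s = 0).\<close>
definition hcontrib :: "nat \<Rightarrow> 'a::metric_space set \<Rightarrow> ennreal" where
  "hcontrib s U = (if U = {} then 0 else ennreal (hausdorff_const s * diameter U ^ s))"

definition hausdorff_pre :: "nat \<Rightarrow> real \<Rightarrow> 'a::metric_space set \<Rightarrow> ennreal" where
  "hausdorff_pre s \<delta> A =
     (INF U \<in> {U :: nat \<Rightarrow> 'a set. A \<subseteq> (\<Union>i. U i) \<and> (\<forall>i. bounded (U i) \<and> diameter (U i) \<le> \<delta>)}.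
        (\<Sum>i. hcontrib s (U i)))"

definition hausdorff_measure :: "nat \<Rightarrow> 'a::metric_space set \<Rightarrow> ennreal" where
  "hausdorff_measure s A = (SUP \<delta> \<in> {0<..}. hausdorff_pre s \<delta> A)"

text \<open>A node is a pair (j, m): scale j and integer corner m with 0 <= m i < 2^j.\<close>
type_synonym 'n dnode = "nat \<times> ('n \<Rightarrow> nat)"

definition dyadic_nodes :: "'n dnode set" where
  "dyadic_nodes = {(j, m). \<forall>i. m i < 2 ^ j}"

definition dyadic_cube :: "'n::finite dnode \<Rightarrow> (real ^ 'n) set" where
  "dyadic_cube q = {x. \<forall>i. real (snd q i) / 2 ^ fst q \<le> x $ i \<and> x $ i \<le> (real (snd q i) + 1) / 2 ^ fst q}"

definition dyadic_root :: "'n dnode" where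
  "dyadic_root = (0, (\<lambda>_. 0))"

definition dyadic_parent :: "'n dnode \<Rightarrow> 'n dnode" where
  "dyadic_parent q = (fst q - 1, (\<lambda>i. snd q i div 2))"

definition proper_subtree :: "'n dnode set \<Rightarrow> bool" where
  "proper_subtree T \<longleftrightarrow> T \<subseteq> dyadic_nodes \<and> dyadic_root \<in> T \<and>
     (\<forall>q\<in>T. q \<noteq> dyadic_root \<longrightarrow> dyadic_parent q \<in> T)"

definition outer_leaves :: "'n dnode set \<Rightarrow> 'n dnode set" where
  "outer_leaves T = {q \<in> dyadic_nodes. q \<noteq> dyadic_root \<and> q \<notin> T \<and> dyadic_parent q \<in> T}"

definition common_boundary :: "'n::finite dnode set \<Rightarrow> (real ^ 'n) set" where
  "common_boundary \<Lambda> = {x. \<exists>q1\<in>\<Lambda>. \<exists>q2\<in>\<Lambda>. q1 \<noteq> q2 \<and> x \<in> dyadic_cube q1 \<and> x \<in> dyadic_cube q2}"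

end

theory Submission
  imports Defs "HOL-Library.FuncSet"
begin


lemma pre_le_finite:
  fixes U :: "'i \<Rightarrow> 'a::metric_space set"
  assumes "finite I" "A \<subseteq> (\<Union>i\<in>I. U i)"
    "\<And>i. i\<in>I \<Longrightarrow> bounded (U i) \<and> diameter (U i) \<le> \<delta>" "0 \<le> \<delta>"
  shows "hausdorff_pre s \<delta> A \<le> (\<Sum>i\<in>I. hcontrib s (U i))"
proof -
  obtain f where f: "bij_betw f {..<card I} I"
    using ex_bij_betw_nat_finite[OF assms(1)] by (auto simp: atLeast0LessThan)
  define V where "V n = (if n < card I then U (f n) else {})" for n
  have cov: "A \<subseteq> (\<Union>n. V n)"
  proof
    fix x assume "x \<in> A"
    then obtain i where i: "i \<in> I" "x \<in> U i" using assms(2) by blast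
    then obtain n where "n < card I" "f n = i" using f by (metis bij_betw_def imageE lessThan_iff)
    then show "x \<in> (\<Union>n. V n)" using i by (auto simp: V_def)
  qed
  have bd: "\<forall>n. bounded (V n) \<and> diameter (V n) \<le> \<delta>"
    using assms(3,4) f by (auto simp: V_def bij_betw_def)
  have "hausdorff_pre s \<delta> A \<le> (\<Sum>n. hcontrib s (V n))"
    unfolding hausdorff_pre_def by (rule INF_lower) (use cov bd in blast)
  also have "(\<Sum>n. hcontrib s (V n)) = (\<Sum>n\<in>{..<card I}. hcontrib s (V n))"
    by (rule suminf_finite) (auto simp: V_def hcontrib_def)
  also have "\<dots> = (\<Sum>n\<in>{..<card I}. hcontrib s (U (f n)))"
    by (auto simp: V_def)
  also have "\<dots> = (\<Sum>i\<in>I. hcontrib s (U i))"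
    using sum.reindex_bij_betw[OF f, of "\<lambda>i. hcontrib s (U i)"] by simp
  finally show ?thesis .
qed



lemma exp1_le_3: "exp (1::real) \<le> 3"
proof -
  have a: "1 + (-(1/8)) \<le> exp (-(1/8)::real)" by (rule exp_ge_add_one_self)
  hence a': "7/8 \<le> inverse (exp (1/8::real))" by (simp add: exp_minus)
  have "exp (1/8::real) * (7/8) \<le> exp (1/8) * inverse (exp (1/8::real))"
    using a' by (intro mult_left_mono) auto
  also have "\<dots> = 1" by simp
  finally have "exp (1/8::real) \<le> 8/7" by simp
  hence "exp (1/8::real) ^ 8 \<le> (8/7) ^ 8" by (intro power_mono) auto
  moreover have "exp (1/8::real) ^ 8 = exp 1" by (simp add: exp_of_nat_mult[symmetric])
  moreover have "(8/7::real) ^ 8 \<le> 3" by (simp add: power_divide)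
  ultimately show ?thesis by simp
qed

lemma one_plus_inv_powr: assumes "(k::real) > 0" shows "(1 + 1/k) powr k \<le> 3"
proof -
  have "1 + 1/k \<noteq> 0" using assms by (metis add_pos_pos divide_pos_pos zero_less_one less_irrefl)
  then have "(1 + 1/k) powr k = exp (k * ln (1 + 1/k))"
    by (simp add: powr_def)
  also have "\<dots> \<le> exp (k * (1/k))"
    using assms ln_add_one_self_le_self[of "1/k"] by (intro exp_mono mult_left_mono) auto
  also have "\<dots> = exp 1" using assms by simp
  finally show ?thesis using exp1_le_3 by simp
qed

lemma Gamma32: "Gamma (1/2 + 1 :: real) = 1/2 * sqrt pi"
proof -
  have "(1/2::real) \<notin> \<int>\<^sub>\<le>\<^sub>0" using nonpos_Ints_nonpos[of "1/2::real"] by auto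
  then show ?thesis using Gamma_plus1[of "1/2::real"] Gamma_one_half_real by simp
qed

lemma Gamma_lower: "m \<ge> 1 \<Longrightarrow> Gamma (real m / 2 + 1) \<ge> (real m / 6) powr (real m / 2)"
proof (induction m rule: less_induct)
  case (less m)
  show ?case
  proof (cases "m \<le> 2")
    case True
    then have "m = 1 \<or> m = 2" using less.prems by auto
    then show ?thesis
    proof
      assume m: "m = 1"
      have "Gamma (1/2 + 1 :: real) = 1/2 * sqrt pi" by (rule Gamma32)
      moreover have "(1/6::real) powr (1/2) = sqrt (1/6)" by (simp add: powr_half_sqrt)
      moreover have "sqrt (1/6) \<le> 1/2 * sqrt pi"
      proof -
        have "sqrt (1/6) \<le> sqrt (pi/4)" using pi_gt3 by (intro real_sqrt_le_mono) simp
        also have "sqrt (pi/4) = 1/2 * sqrt pi" by (simp add: real_sqrt_divide)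
        finally show ?thesis .
      qed
      ultimately show ?thesis using m by simp
    next
      assume m: "m = 2"
      have "Gamma (2::real) = 1" using Gamma_fact[of 1] by simp
      then show ?thesis using m by simp
    qed
  next
    case False
    define n where "n = m - 2"
    have m: "m = n + 2" and n: "n \<ge> 1" using False by (auto simp: n_def)
    define k where "k = real n / 2"
    have k: "k > 0" using n by (simp add: k_def)
    have IH: "Gamma (k + 1) \<ge> (k/3) powr k"
      using less.IH[of n] n m by (simp add: k_def)
    have e: "real m / 2 + 1 = (k + 1) + 1" by (simp add: m k_def)
    have "k + 1 \<notin> \<int>\<^sub>\<le>\<^sub>0" using nonpos_Ints_nonpos[of "k+1"] k by auto
    then have "Gamma ((k + 1) + 1) = (k+1) * Gamma (k+1)"
      by (rule Gamma_plus1)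
    then have "Gamma (real m / 2 + 1) = (k+1) * Gamma (k+1)"
      by (simp only: e)
    also have "\<dots> \<ge> (k+1) * (k/3) powr k" using IH k by (intro mult_left_mono) auto
    finally have A: "Gamma (real m / 2 + 1) \<ge> (k+1) * (k/3) powr k" .
    have B: "((k+1)/3) powr k \<le> 3 * (k/3) powr k"
    proof -
      have eq: "(k+1)/3 = (k/3) * (1 + 1/k)" using k by (simp add: field_simps)
      have p1: "1 + 1/k > 0" using k by (metis add_pos_pos divide_pos_pos zero_less_one)
      have "((k/3) * (1 + 1/k)) powr k = (k/3) powr k * (1 + 1/k) powr k"
        by (rule powr_mult)
      hence "((k+1)/3) powr k = (k/3) powr k * (1 + 1/k) powr k" by (simp only: eq)
      also have "\<dots> \<le> (k/3) powr k * 3"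
        using one_plus_inv_powr[OF k] by (intro mult_left_mono) auto
      finally show ?thesis by simp
    qed
    have "(real m / 6) powr (real m / 2) = ((k+1)/3) powr (k + 1)"
      by (simp add: m k_def add_divide_distrib ac_simps)
    also have "\<dots> = ((k+1)/3) * ((k+1)/3) powr k"
      using k by (simp add: powr_add mult.commute)
    also have "\<dots> \<le> ((k+1)/3) * (3 * (k/3) powr k)"
      using B k by (intro mult_left_mono) auto
    also have "\<dots> = (k+1) * (k/3) powr k" by simp
    finally show ?thesis using A by linarith
  qed
qed

lemma key_const:
  assumes "m \<ge> 1"
  shows "hausdorff_const m * sqrt (real m / 2) ^ m * (31/15) \<le> 2 ^ m"
proof (cases "m \<le> 2")
  case True
  then have "m = 1 \<or> m = 2" using assms by auto
  then show ?thesis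
  proof
    assume m: "m = 1"
    have "Gamma (1/2 + 1 :: real) = 1/2 * sqrt pi" by (rule Gamma32)
    hence "hausdorff_const 1 = 1"
      by (simp add: hausdorff_const_def powr_half_sqrt)
    moreover have s1: "sqrt (1/2::real) \<le> sqrt 0.5041" by (rule real_sqrt_le_mono) simp
    have s2: "sqrt (0.5041::real) = 0.71" by (rule real_sqrt_unique) (simp_all add: power2_eq_square)
    have "sqrt (1/2::real) \<le> 0.71" using s1 s2 by linarith
    ultimately show ?thesis using m by simp
  next
    assume m: "m = 2"
    have "Gamma (2::real) = 1" using Gamma_fact[of 1] by simp
    hence "hausdorff_const 2 = pi / 4" by (simp add: hausdorff_const_def)
    then show ?thesis using m pi_less_4 by simp
  qed
next
  case False
  define x where "x = real m / 2"
  have x: "x \<ge> 3/2" using False by (simp add: x_def)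
  have xpos: "x > 0" using x by simp
  have G: "Gamma (x + 1) \<ge> (x/3) powr x" using Gamma_lower[OF assms] by (simp add: x_def)
  have Gpos: "Gamma (x+1) > 0" using xpos by simp
  have sq: "sqrt (real m / 2) ^ m = x powr x"
  proof -
    have "sqrt (real m / 2) ^ m = (x powr (1/2)) ^ m" by (simp add: x_def powr_half_sqrt)
    also have "\<dots> = x powr (1/2 * real m)" using xpos by (simp add: powr_realpow[symmetric] powr_powr)
    also have "1/2 * real m = x" by (simp add: x_def)
    finally show ?thesis .
  qed
  have two: "(2::real) ^ m = 4 powr x"
  proof -
    have "(2::real) ^ m = 2 powr (real m)" by (simp add: powr_realpow)
    also have "real m = 2 * x" by (simp add: x_def)
    also have "(2::real) powr (2 * x) = (2 powr 2) powr x" by (simp only: powr_powr)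
    also have "(2::real) powr 2 = 4" by simp
    finally show ?thesis .
  qed
  define r where "r = 16 / (3 * pi)"
  have p3: "1.69 * (3 * pi) \<le> 16" using pi_approx(2) by simp
  have r1: "r \<ge> 1.69" unfolding r_def using p3 pi_gt_zero by (simp add: le_divide_eq)
  have s1: "sqrt r \<ge> sqrt 1.69" using r1 by (rule real_sqrt_le_mono)
  have s2: "sqrt (1.69::real) = 1.3"
    by (rule real_sqrt_unique) (simp_all add: power2_eq_square)
  have sr: "sqrt r \<ge> 1.3" using s1 s2 by linarith
  have "r powr x \<ge> r powr (3/2)" using r1 x by (intro powr_mono) auto
  moreover have "r powr (3/2) = r * sqrt r"
  proof -
    have "r powr (3/2) = r powr (1 + 1/2)" by simp
    also have "\<dots> = r powr 1 * r powr (1/2)" by (rule powr_add)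
    also have "r powr 1 = r" using r1 by simp
    also have "r powr (1/2) = sqrt r" using r1 by (simp add: powr_half_sqrt)
    finally show ?thesis .
  qed
  moreover have "r * sqrt r \<ge> 1.69 * 1.3" using r1 sr by (intro mult_mono) auto
  ultimately have rx: "r powr x \<ge> 31/15" by simp
  have c1: "x powr x = 3 powr x * (x/3) powr x"
    using xpos by (simp add: powr_mult[symmetric])
  have c2: "(3 * pi / 4) powr x = 3 powr x * pi powr x / 4 powr x"
    by (simp add: powr_mult powr_divide)
  have c3: "(x/3) powr x > 0" using xpos by simp
  have E: "pi powr x * x powr x * (31/15) / (x/3) powr x / 4 powr x
       = (3 * pi / 4) powr x * (31/15)"
    unfolding c1 c2 using c3 by (simp add: field_simps)
  have "hausdorff_const m * sqrt (real m / 2) ^ m * (31/15)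
        = pi powr x * x powr x * (31/15) / Gamma (x+1) / 4 powr x"
    unfolding hausdorff_const_def sq two[symmetric] by (simp add: x_def)
  also have "\<dots> \<le> pi powr x * x powr x * (31/15) / (x/3) powr x / 4 powr x"
    using G Gpos c3 mult_pos_pos[OF Gpos c3] by (intro divide_right_mono divide_left_mono) auto
  also have "\<dots> = (3 * pi / 4) powr x * (31/15)" by (rule E)
  also have "\<dots> \<le> (3 * pi / 4) powr x * r powr x"
    using rx by (intro mult_left_mono) auto
  also have "\<dots> = ((3 * pi / 4) * r) powr x" by (rule powr_mult[symmetric])
  also have "(3 * pi / 4) * r = 4" by (simp add: r_def)
  finally show ?thesis using two by simp
qed



lemma card_bounded_funs: "card {a::'n::finite \<Rightarrow> nat. \<forall>i. a i < K} = K ^ CARD('n)"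
proof -
  have "{a::'n \<Rightarrow> nat. \<forall>i. a i < K} = PiE UNIV (\<lambda>_. {..<K})"
    by (auto simp: PiE_UNIV_domain Pi_def)
  moreover have "card (PiE (UNIV::'n set) (\<lambda>_. {..<K})) = K ^ CARD('n)"
    by (simp add: card_PiE)
  ultimately show ?thesis by simp
qed

lemma level_card:
  fixes T :: "('n::finite) dnode set"
  assumes "T \<subseteq> dyadic_nodes"
  shows "card {q \<in> T. fst q = j} \<le> 2 ^ (j * CARD('n))"
proof -
  have sub: "{q \<in> T. fst q = j} \<subseteq> Pair j ` {a::'n \<Rightarrow> nat. \<forall>i. a i < 2^j}"
    using assms by (force simp: dyadic_nodes_def)
  have fin: "finite {a::'n \<Rightarrow> nat. \<forall>i. a i < 2^j}"
  proof -
    have "{a::'n \<Rightarrow> nat. \<forall>i. a i < 2^j} = PiE UNIV (\<lambda>_. {..<2^j})"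
      by (auto simp: PiE_UNIV_domain Pi_def)
    then show ?thesis by (simp add: finite_PiE)
  qed
  have "card {q \<in> T. fst q = j} \<le> card (Pair j ` {a::'n \<Rightarrow> nat. \<forall>i. a i < 2^j})"
    using sub fin by (intro card_mono) auto
  also have "\<dots> \<le> card {a::'n \<Rightarrow> nat. \<forall>i. a i < 2^j}" by (rule card_image_le[OF fin])
  also have "\<dots> = (2^j) ^ CARD('n)" by (rule card_bounded_funs)
  finally show ?thesis by (simp add: power_mult)
qed

lemma sum_pow2_le: "(\<Sum>j\<le>J. (2::real) ^ j) \<le> 2 ^ (J+1)"
  by (induction J) auto

lemma sum_levels:
  fixes T :: "('n::finite) dnode set"
  assumes sub: "T \<subseteq> dyadic_nodes" and fin: "finite T" and ne: "T \<noteq> {}"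
  shows "(\<Sum>q\<in>T. (1 / 2 ^ fst q :: real) ^ (CARD('n) - 1))
           \<le> 4 * real (card T) powr (1 / real CARD('n))"
proof -
  define d where "d = CARD('n)"
  define m where "m = d - 1"
  define N where "N = card T"
  have d1: "d \<ge> 1" unfolding d_def by (simp add: Suc_leI)
  have dm: "d = m + 1" using d1 by (simp add: m_def)
  have N1: "N \<ge> 1" using fin ne by (simp add: N_def Suc_leI card_gt_0_iff)
  define f where "f q = (1 / 2 ^ fst q :: real) ^ m" for q :: "'n dnode"
  have ex: "\<exists>J. N < 2 ^ ((J+1) * d)"
  proof
    have "N * 1 \<le> N * d" using d1 by (rule mult_le_mono2)
    then have Nd: "N \<le> (N+1) * d" by (simp add: trans_le_add2)
    have "N < 2 ^ N" by (rule less_exp)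
    also have "\<dots> \<le> 2 ^ ((N+1) * d)" using Nd by (intro power_increasing) auto
    finally show "N < 2 ^ ((N+1) * d)" .
  qed
  define J where "J = (LEAST J. N < 2 ^ ((J+1) * d))"
  have J2: "N < 2 ^ ((J+1) * d)" unfolding J_def by (rule LeastI_ex[OF ex])
  have J1: "2 ^ (J * d) \<le> N"
  proof (cases J)
    case 0 then show ?thesis using N1 by simp
  next
    case (Suc J')
    have "\<not> N < 2 ^ ((J'+1) * d)"
    proof
      assume "N < 2 ^ ((J'+1) * d)"
      then have "J \<le> J'" unfolding J_def by (rule Least_le)
      then show False using Suc by simp
    qed
    then show ?thesis using Suc by simp
  qed
  define TL where "TL = {q \<in> T. fst q \<le> J}"
  define TH where "TH = {q \<in> T. \<not> fst q \<le> J}"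
  have split: "sum f T = sum f TL + sum f TH"
  proof -
    have "T = TL \<union> TH" "TL \<inter> TH = {}" by (auto simp: TL_def TH_def)
    moreover have "finite TL" "finite TH" using fin by (auto simp: TL_def TH_def)
    ultimately show ?thesis by (metis sum.union_disjoint)
  qed
  have low: "sum f TL \<le> 2 ^ (J+1)"
  proof -
    have "sum f TL = (\<Sum>j\<in>{..J}. sum f {q \<in> TL. fst q = j})"
      using fin by (intro sum.group[symmetric]) (auto simp: TL_def)
    also have "\<dots> \<le> (\<Sum>j\<in>{..J}. (2::real) ^ j)"
    proof (rule sum_mono)
      fix j assume "j \<in> {..J}"
      have eq: "{q \<in> TL. fst q = j} = {q \<in> T. fst q = j}" using \<open>j \<in> {..J}\<close>
        by (auto simp: TL_def)
      have "sum f {q \<in> TL. fst q = j} = real (card {q \<in> T. fst q = j}) * (1 / 2 ^ j) ^ m"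
        unfolding eq f_def by simp
      also have "\<dots> \<le> real (2 ^ (j * d)) * (1 / 2 ^ j) ^ m"
        using level_card[OF sub, of j] by (intro mult_right_mono) (auto simp: d_def)
      also have "\<dots> = 2 ^ j"
        by (simp add: dm power_mult power_add power_divide field_simps)
      finally show "sum f {q \<in> TL. fst q = j} \<le> 2 ^ j" .
    qed
    also have "\<dots> \<le> 2 ^ (J+1)" by (rule sum_pow2_le)
    finally show ?thesis .
  qed
  have high: "sum f TH \<le> 2 ^ (J+1)"
  proof -
    have "sum f TH \<le> (\<Sum>q\<in>TH. (1 / 2 ^ (J+1)) ^ m)"
    proof (rule sum_mono)
      fix q assume "q \<in> TH"
      then have "J + 1 \<le> fst q" by (auto simp: TH_def)
      then have "(2::real) ^ (J+1) \<le> 2 ^ fst q" by (intro power_increasing) auto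
      then have "1 / 2 ^ fst q \<le> 1 / (2::real) ^ (J+1)" by (intro divide_left_mono) auto
      then show "f q \<le> (1 / 2 ^ (J+1)) ^ m" unfolding f_def by (intro power_mono) auto
    qed
    also have "\<dots> = real (card TH) * (1 / 2 ^ (J+1)) ^ m" by simp
    also have "\<dots> \<le> real N * (1 / 2 ^ (J+1)) ^ m"
      using fin by (intro mult_right_mono) (auto simp: N_def TH_def intro!: card_mono)
    also have "\<dots> \<le> real (2 ^ ((J+1) * d)) * (1 / 2 ^ (J+1)) ^ m"
      using J2 by (intro mult_right_mono) auto
    also have "\<dots> = 2 ^ (J+1)"
      by (simp add: dm power_mult power_add power_divide field_simps)
    finally show ?thesis .
  qed
  have pw: "(2::real) ^ J \<le> real N powr (1 / real d)"
  proof -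
    have "(2::real) ^ J = (2 ^ (J * d)) powr (1 / real d)"
      using d1 by (simp add: powr_realpow[symmetric] powr_powr)
    also have "\<dots> \<le> real N powr (1 / real d)"
      using J1 by (intro powr_mono2) (auto simp: of_nat_le_iff[symmetric])
    finally show ?thesis .
  qed
  have "sum f T \<le> 4 * 2 ^ J" using split low high by simp
  also have "\<dots> \<le> 4 * real N powr (1 / real d)" using pw by simp
  finally show ?thesis by (simp add: f_def m_def d_def N_def)
qed



definition anc :: "nat \<Rightarrow> 'n dnode \<Rightarrow> 'n dnode" where
  "anc k q = (k, \<lambda>l. snd q l div 2 ^ (fst q - k))"

definition slice :: "'n::finite dnode \<Rightarrow> 'n \<Rightarrow> (real ^ 'n) set" where
  "slice q i = {x \<in> dyadic_cube q. x $ i = (real (snd q i) + 1/2) / 2 ^ fst q}"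

lemma anc_self: "anc (fst q) q = q"
  by (simp add: anc_def)

lemma pow2_split: "k \<le> j \<Longrightarrow> (2::nat) ^ j = 2 ^ k * 2 ^ (j - k)"
  by (simp add: power_add[symmetric])

lemma parent_anc: "k < fst q \<Longrightarrow> dyadic_parent (anc (Suc k) q) = anc k q"
proof -
  assume k: "k < fst q"
  have e: "fst q - k = Suc (fst q - Suc k)" using k by simp
  have "(2::nat) ^ (fst q - k) = 2 ^ (fst q - Suc k) * 2"
    by (simp add: e)
  then show ?thesis using k by (auto simp: dyadic_parent_def anc_def div_mult2_eq)
qed

lemma anc_parent: "k < fst q \<Longrightarrow> anc k (dyadic_parent q) = anc k q"
proof -
  assume k: "k < fst q"
  have "(2::nat) ^ (fst q - k) = 2 * 2 ^ (fst q - 1 - k)"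
    using k by (simp add: power_Suc[symmetric] Suc_diff_Suc)
  then show ?thesis using k by (auto simp: dyadic_parent_def anc_def div_mult2_eq)
qed

lemma anc_anc: "k \<le> j \<Longrightarrow> j \<le> fst q \<Longrightarrow> anc k (anc j q) = anc k q"
proof -
  assume a: "k \<le> j" "j \<le> fst q"
  have "(2::nat) ^ (fst q - k) = 2 ^ (fst q - j) * 2 ^ (j - k)"
    using a by (simp add: power_add[symmetric])
  then show ?thesis using a by (auto simp: anc_def div_mult2_eq)
qed

lemma anc_in_T:
  assumes T: "proper_subtree T" and q: "q \<in> T" and k: "k \<le> fst q"
  shows "anc k q \<in> T"
proof -
  have "\<forall>k. fst q - k = n \<longrightarrow> k \<le> fst q \<longrightarrow> anc k q \<in> T" for n
  proof (induction n)
    case 0 then show ?case using q by (auto simp: anc_self[of q] intro: le_antisym)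
  next
    case (Suc n)
    show ?case
    proof (intro allI impI)
      fix k assume a: "fst q - k = Suc n" "k \<le> fst q"
      then have kl: "k < fst q" by simp
      have "anc (Suc k) q \<in> T" using Suc.IH a by simp
      moreover have "anc (Suc k) q \<noteq> dyadic_root" by (simp add: anc_def dyadic_root_def)
      ultimately have "dyadic_parent (anc (Suc k) q) \<in> T"
        using T unfolding proper_subtree_def by blast
      then show "anc k q \<in> T" using parent_anc[OF kl] by simp
    qed
  qed
  then show ?thesis using k by blast
qed

lemma anc_nodes: "q \<in> dyadic_nodes \<Longrightarrow> k \<le> fst q \<Longrightarrow> anc k q \<in> dyadic_nodes"
proof -
  assume q: "q \<in> dyadic_nodes" and k: "k \<le> fst q"
  have "snd q l div 2 ^ (fst q - k) < 2 ^ k" for l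
  proof -
    have "snd q l < 2 ^ fst q" using q by (auto simp: dyadic_nodes_def)
    also have "\<dots> = 2 ^ k * 2 ^ (fst q - k)" using pow2_split[OF k] .
    finally show ?thesis by (rule less_mult_imp_div_less)
  qed
  then show ?thesis by (simp add: dyadic_nodes_def anc_def)
qed

lemma anc_cube:
  fixes q :: "'n::finite dnode"
  assumes k: "k \<le> fst q"
  shows "dyadic_cube q \<subseteq> dyadic_cube (anc k q)"
proof
  fix x assume x: "x \<in> dyadic_cube q"
  define p :: nat where "p = 2 ^ (fst q - k)"
  have pp: "p > 0" by (simp add: p_def)
  have jp: "(2::real) ^ fst q = 2 ^ k * real p"
  proof -
    have "real ((2::nat) ^ fst q) = real (2 ^ k * 2 ^ (fst q - k))" using pow2_split[OF k] by simp
    then show ?thesis unfolding p_def by simp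
  qed
  show "x \<in> dyadic_cube (anc k q)"
    unfolding dyadic_cube_def anc_def
  proof (simp, intro allI conjI)
    fix l
    define a where "a = snd q l"
    define b where "b = a div p"
    have x1: "real a / 2 ^ fst q \<le> x $ l" and x2: "x $ l \<le> (real a + 1) / 2 ^ fst q"
      using x by (auto simp: dyadic_cube_def a_def)
    have n1: "b * p \<le> a" by (simp add: b_def div_times_less_eq_dividend)
    have n2: "a + 1 \<le> (b + 1) * p"
    proof -
      have "a = b * p + a mod p" by (simp add: b_def)
      moreover have "a mod p < p" using pp by simp
      ultimately show ?thesis by (simp add: algebra_simps)
    qed
    have "real (b * p) \<le> real a" using n1 by (simp only: of_nat_le_iff)
    then have r1: "real b * real p \<le> real a" by simp
    have "real (a + 1) \<le> real ((b + 1) * p)" using n2 by (simp only: of_nat_le_iff)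
    then have r2: "real a + 1 \<le> (real b + 1) * real p" by (simp add: algebra_simps)
    have "real b / 2 ^ k = real b * real p / 2 ^ fst q" using pp jp by simp
    also have "\<dots> \<le> real a / 2 ^ fst q" using r1 by (intro divide_right_mono) auto
    finally show "real (snd q l div 2 ^ (fst q - k)) / 2 ^ k \<le> x $ l"
      using x1 by (simp add: a_def b_def p_def)
    have "(real a + 1) / 2 ^ fst q \<le> (real b + 1) * real p / 2 ^ fst q"
      using r2 by (intro divide_right_mono) auto
    also have "\<dots> = (real b + 1) / 2 ^ k" using pp jp by simp
    finally show "x $ l \<le> (real (snd q l div 2 ^ (fst q - k)) + 1) / 2 ^ k"
      using x2 by (simp add: a_def b_def p_def)
  qed
qed

lemma odd_decomp: "n \<ge> (1::nat) \<Longrightarrow> \<exists>u t. n = (2 * u + 1) * 2 ^ t"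
proof (induction n rule: less_induct)
  case (less n)
  show ?case
  proof (cases "even n")
    case True
    then obtain n' where n': "n = 2 * n'" by blast
    then have "n' \<ge> 1" "n' < n" using less.prems by auto
    then obtain u t where "n' = (2 * u + 1) * 2 ^ t" using less.IH by blast
    then have "n = (2 * u + 1) * 2 ^ Suc t" using n' by simp
    then show ?thesis by blast
  next
    case False
    then have "n = (2 * (n div 2) + 1) * 2 ^ 0" by simp
    then show ?thesis by blast
  qed
qed



lemma same_level_aux:
  fixes A B :: "'n::finite dnode"
  assumes B: "B \<in> dyadic_nodes" and lev: "fst A = fst B"
    and xa: "x \<in> dyadic_cube A" and xb: "x \<in> dyadic_cube B"
    and ancB: "\<And>k. k < fst B \<Longrightarrow> anc k B \<in> T"
    and lt: "snd A i < snd B i"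
  shows "\<exists>q\<in>T. \<exists>i. x \<in> slice q i"
proof -
  define j where "j = fst B"
  define n where "n = snd B i"
  have xi1: "real n / 2 ^ j \<le> x $ i" using xb by (auto simp: dyadic_cube_def n_def j_def)
  have xi2: "x $ i \<le> (real (snd A i) + 1) / 2 ^ j" using xa lev by (auto simp: dyadic_cube_def j_def)
  have "real n / 2 ^ j \<le> (real (snd A i) + 1) / 2 ^ j" using xi1 xi2 by linarith
  then have "real n \<le> real (snd A i) + 1" by (simp add: divide_right_mono_neg divide_le_cancel)
  then have nA: "n = snd A i + 1" using lt unfolding n_def by linarith
  have e: "(real (snd A i) + 1) / 2^j = real n / 2^j" using nA by simp
  have xi: "x $ i = real n / 2 ^ j"
    using xi1 xi2 e by linarith
  have n1: "n \<ge> 1" using nA by simp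
  have n2: "n < 2 ^ j" using B by (auto simp: dyadic_nodes_def n_def j_def)
  obtain u t where ut: "n = (2 * u + 1) * 2 ^ t" using odd_decomp[OF n1] by blast
  have "2 ^ t \<le> n" using ut by simp
  then have "(2::nat) ^ t < 2 ^ j" using n2 by linarith
  then have tj: "t < j" by (rule nat_power_less_imp_less[rotated]) simp
  define k where "k = j - t - 1"
  have kj: "k < j" using tj by (simp add: k_def)
  have jk: "j - k = Suc t" using tj by (simp add: k_def)
  define c where "c = anc k B"
  have cT: "c \<in> T" using ancB kj by (simp add: c_def j_def)
  have xc: "x \<in> dyadic_cube c" using anc_cube[of k B] kj xb by (auto simp: c_def j_def)
  have ci: "snd c i = u"
  proof -
    have "snd c i = n div 2 ^ Suc t" by (simp add: c_def anc_def n_def jk[unfolded j_def])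
    also have "n = u * 2 ^ Suc t + 2 ^ t" using ut by simp
    also have "(u * 2 ^ Suc t + 2 ^ t) div 2 ^ Suc t = u" by simp
    finally show ?thesis .
  qed
  have fc: "fst c = k" by (simp add: c_def anc_def)
  have "x $ i = (real (snd c i) + 1/2) / 2 ^ fst c"
  proof -
    have jj: "j = k + t + 1" using tj by (simp add: k_def)
    have "(2::real) ^ j = 2 ^ k * 2 ^ t * 2" unfolding jj by (simp add: power_add)
    moreover have "real n = (2 * real u + 1) * 2 ^ t" using ut by (simp add: algebra_simps)
    ultimately show ?thesis unfolding xi ci fc by (simp add: field_simps)
  qed
  then have "x \<in> slice c i" using xc by (simp add: slice_def)
  then show ?thesis using cT by blast
qed

lemma same_level:
  fixes A B :: "'n::finite dnode"
  assumes A: "A \<in> dyadic_nodes" and B: "B \<in> dyadic_nodes" and lev: "fst A = fst B"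
    and ne: "A \<noteq> B"
    and xa: "x \<in> dyadic_cube A" and xb: "x \<in> dyadic_cube B"
    and ancA: "\<And>k. k < fst A \<Longrightarrow> anc k A \<in> T"
    and ancB: "\<And>k. k < fst B \<Longrightarrow> anc k B \<in> T"
  shows "\<exists>q\<in>T. \<exists>i. x \<in> slice q i"
proof -
  have "snd A \<noteq> snd B" using ne lev by (metis prod.expand)
  then obtain i where "snd A i \<noteq> snd B i" by blast
  then consider "snd A i < snd B i" | "snd B i < snd A i" by linarith
  then show ?thesis
  proof cases
    case 1 then show ?thesis using same_level_aux[OF B lev xa xb ancB] by blast
  next
    case 2 then show ?thesis using same_level_aux[OF A lev[symmetric] xb xa ancA] by blast
  qed
qed

lemma boundary_in_slices_aux:
  fixes T :: "('n::finite) dnode set"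
  assumes T: "proper_subtree T"
    and q1: "q1 \<in> outer_leaves T" and q2: "q2 \<in> outer_leaves T" and ne: "q1 \<noteq> q2"
    and x1: "x \<in> dyadic_cube q1" and x2: "x \<in> dyadic_cube q2"
    and le: "fst q1 \<le> fst q2"
  shows "\<exists>q\<in>T. \<exists>i. x \<in> slice q i"
proof -
  define j where "j = fst q1"
  define r where "r = anc j q2"
  have q1n: "q1 \<in> dyadic_nodes" "q1 \<notin> T" "dyadic_parent q1 \<in> T" "q1 \<noteq> dyadic_root"
    using q1 by (auto simp: outer_leaves_def)
  have q2n: "q2 \<in> dyadic_nodes" "q2 \<notin> T" "dyadic_parent q2 \<in> T" "q2 \<noteq> dyadic_root"
    using q2 by (auto simp: outer_leaves_def)
  have j1: "fst q1 \<ge> 1"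
  proof (rule ccontr)
    assume "\<not> fst q1 \<ge> 1"
    then have "fst q1 = 0" by simp
    then have "snd q1 = (\<lambda>_. 0)" using q1n(1) by (auto simp: dyadic_nodes_def)
    then have "q1 = dyadic_root" using \<open>fst q1 = 0\<close> by (simp add: dyadic_root_def prod_eq_iff)
    then show False using q1n(4) by simp
  qed
  have rn: "r \<in> dyadic_nodes" using anc_nodes[OF q2n(1)] le by (simp add: r_def j_def)
  have xr: "x \<in> dyadic_cube r" using anc_cube[of j q2] le x2 by (auto simp: r_def j_def)
  have fr: "fst r = j" by (simp add: r_def anc_def)
  have ancq2: "anc k q2 \<in> T" if "k < fst q2" for k
  proof -
    have "anc k q2 = anc k (dyadic_parent q2)" using anc_parent[OF that] by simp
    moreover have "k \<le> fst (dyadic_parent q2)" using that by (simp add: dyadic_parent_def)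
    ultimately show ?thesis using anc_in_T[OF T q2n(3)] by simp
  qed
  have rq1: "r \<noteq> q1"
  proof (cases "j = fst q2")
    case True
    then have "r = q2" by (simp add: r_def anc_self)
    then show ?thesis using ne by simp
  next
    case False
    then have "j < fst q2" using le by (simp add: j_def)
    then have "r \<in> T" using ancq2 by (simp add: r_def)
    then show ?thesis using q1n(2) by auto
  qed
  have ancq1: "anc k q1 \<in> T" if "k < fst q1" for k
  proof -
    have "anc k q1 = anc k (dyadic_parent q1)" using anc_parent[OF that] by simp
    moreover have "k \<le> fst (dyadic_parent q1)" using that by (simp add: dyadic_parent_def)
    ultimately show ?thesis using anc_in_T[OF T q1n(3)] by simp
  qed
  have ancr: "anc k r \<in> T" if "k < fst r" for k
  proof -
    have kj: "k \<le> j" using that fr by simp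
    have "j \<le> fst q2" using le by (simp add: j_def)
    then have "anc k r = anc k q2" using anc_anc[OF kj] by (simp add: r_def)
    then show ?thesis using ancq2 that le fr j_def by simp
  qed
  show ?thesis
    using same_level[OF q1n(1) rn _ rq1[symmetric] x1 xr ancq1 ancr] fr by (simp add: j_def)
qed

lemma boundary_in_slices:
  fixes T :: "('n::finite) dnode set"
  assumes T: "proper_subtree T"
  shows "common_boundary (outer_leaves T) \<subseteq> (\<Union>q\<in>T. \<Union>i. slice q i)"
proof
  fix x assume "x \<in> common_boundary (outer_leaves T)"
  then obtain q1 q2 where q: "q1 \<in> outer_leaves T" "q2 \<in> outer_leaves T" "q1 \<noteq> q2"
    "x \<in> dyadic_cube q1" "x \<in> dyadic_cube q2" by (auto simp: common_boundary_def)
  have "\<exists>q\<in>T. \<exists>i. x \<in> slice q i"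
  proof (cases "fst q1 \<le> fst q2")
    case True then show ?thesis using boundary_in_slices_aux[OF T q] by blast
  next
    case False then show ?thesis
      using boundary_in_slices_aux[OF T q(2) q(1) q(3)[symmetric] q(5) q(4)] by simp
  qed
  then show "x \<in> (\<Union>q\<in>T. \<Union>i. slice q i)" by blast
qed



lemma exp16: "exp (1/16::real) \<le> 16/15"
proof -
  have a: "1 + (-(1/16)) \<le> exp (-(1/16)::real)" by (rule exp_ge_add_one_self)
  hence a': "15/16 \<le> inverse (exp (1/16::real))" by (simp add: exp_minus)
  have "exp (1/16::real) * (15/16) \<le> exp (1/16) * inverse (exp (1/16::real))"
    using a' by (intro mult_left_mono) auto
  also have "\<dots> = 1" by simp
  finally show ?thesis by simp
qed

lemma pow_small:
  assumes "N \<ge> 16 * m" "m \<ge> 1"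
  shows "(1 + 1 / real N) ^ m \<le> 16/15"
proof -
  have Npos: "real N > 0" using assms by simp
  have "(1 + 1 / real N) ^ m \<le> exp (1 / real N) ^ m"
    using exp_ge_add_one_self[of "1 / real N"] by (intro power_mono) auto
  also have "\<dots> = exp (real m / real N)" by (simp add: exp_of_nat_mult[symmetric])
  also have "\<dots> \<le> exp (1/16)"
  proof -
    have "real m * 16 \<le> real N" using assms(1) by simp
    then have "real m / real N \<le> 1/16" using Npos by (simp add: divide_simps)
    then show ?thesis by simp
  qed
  also have "\<dots> \<le> 16/15" by (rule exp16)
  finally show ?thesis .
qed

lemma card_box:
  fixes i :: "'n::finite"
  shows "card (PiE UNIV (\<lambda>l::'n. if l = i then {0::nat} else B)) = card B ^ (CARD('n) - 1)"
proof -
  have "card (PiE UNIV (\<lambda>l::'n. if l = i then {0::nat} else B))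
        = (\<Prod>l\<in>UNIV. card (if l = i then {0::nat} else B))" by (simp add: card_PiE)
  also have "\<dots> = card (if i = i then {0::nat} else B) * (\<Prod>l\<in>UNIV - {i}. card (if l = i then {0::nat} else B))"
    by (rule prod.remove) auto
  also have "(\<Prod>l\<in>UNIV - {i}. card (if l = i then {0::nat} else B)) = (\<Prod>l\<in>UNIV - {i}. card B)"
    by (rule prod.cong) auto
  also have "\<dots> = card B ^ (CARD('n) - 1)" by (simp add: card_Diff_singleton)
  finally show ?thesis by simp
qed

lemma sq_le_quarter:
  fixes f :: real assumes "0 \<le> f" "f \<le> 1"
  shows "(f - 1/2)^2 + (f - (if f \<le> 1/2 then 0 else 1))^2 \<le> 1/4"
proof (cases "f \<le> 1/2")
  case True
  have "f * (2*f - 1) \<le> 0" using True assms by (intro mult_nonneg_nonpos) auto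
  then show ?thesis using True by (simp add: power2_eq_square algebra_simps)
next
  case False
  have "(2*f - 1) * (f - 1) \<le> 0" using False assms by (intro mult_nonneg_nonpos) auto
  then show ?thesis using False by (simp add: power2_eq_square algebra_simps)
qed



lemma hconst_nonneg: "hausdorff_const m \<ge> 0"
  unfolding hausdorff_const_def by (intro divide_nonneg_nonneg) (auto intro!: Gamma_real_nonneg add_nonneg_pos)

lemma dist_vec_sum: "dist (x::real^'n::finite) y = sqrt (\<Sum>l\<in>UNIV. (x$l - y$l)^2)"
  by (simp add: dist_vec_def L2_set_def dist_real_def)

lemma slice_cover_pos:
  fixes q :: "'n::finite dnode" and i :: 'n
  assumes \<delta>: "\<delta> > 0" and m1: "CARD('n) - 1 \<ge> 1"
  shows "\<exists>F. finite F \<and> slice q i \<subseteq> \<Union>F \<and> (\<forall>U\<in>F. bounded U \<and> diameter U \<le> \<delta>) \<and>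
    (\<Sum>U\<in>F. hcontrib (CARD('n) - 1) U) \<le> ennreal (2^(CARD('n)-1) * (1/2^fst q)^(CARD('n)-1))"
proof -
  define m where "m = CARD('n) - 1"
  have m1': "m \<ge> 1" using m1 by (simp add: m_def)
  define s :: real where "s = 1/2^fst q"
  define M :: nat where "M = nat \<lceil>1/\<delta>\<rceil> + 1"
  define N :: nat where "N = 16*m*M"
  define h where "h = s / real N"
  define R where "R = h * sqrt (real m/2) / 2"
  define a where "a l = real (snd q l) * s" for l
  define v where "v = (real (snd q i) + 1/2) * s"
  define K1 where "K1 = PiE UNIV (\<lambda>l::'n. if l = i then {0::nat} else {..N})"
  define K2 where "K2 = PiE UNIV (\<lambda>l::'n. if l = i then {0::nat} else {..<N})"
  define p1 where "p1 k = (\<chi> l. if l = i then v else a l + h * real (k l))" for k :: "'n \<Rightarrow> nat"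
  define p2 where "p2 k = (\<chi> l. if l = i then v else a l + h * (real (k l) + 1/2))" for k :: "'n \<Rightarrow> nat"
  define P where "P = p1 ` K1 \<union> p2 ` K2"
  define F where "F = (\<lambda>p. cball p R) ` P"
  have M1: "M \<ge> 1" by (simp add: M_def)
  have Mgt: "real M > 1/\<delta>"
  proof -
    have "1/\<delta> \<le> real (nat \<lceil>1/\<delta>\<rceil>)" by linarith
    then show ?thesis by (simp add: M_def)
  qed
  have N16: "N \<ge> 16 * m" using M1 by (simp add: N_def)
  have N1: "N \<ge> 1" using N16 m1' by simp
  have spos: "s > 0" and sle: "s \<le> 1" by (auto simp: s_def)
  have hpos: "h > 0" using spos N1 by (simp add: h_def)
  have Rnn: "R \<ge> 0" using hpos by (simp add: R_def)
  have finK1: "finite K1" by (simp add: K1_def finite_PiE)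
  have finK2: "finite K2" by (simp add: K2_def finite_PiE)
  have cK1: "card K1 = (N+1)^m" unfolding K1_def m_def using card_box[of i "{..N}"] by simp
  have cK2: "card K2 = N^m" unfolding K2_def m_def using card_box[of i "{..<N}"] by simp
  have finF: "finite F" using finK1 finK2 by (simp add: F_def P_def)
  have cover: "slice q i \<subseteq> \<Union>F"
  proof
    fix x assume x: "x \<in> slice q i"
    have xi: "x $ i = v" using x by (simp add: slice_def v_def s_def)
    have xl: "a l \<le> x $ l \<and> x $ l \<le> a l + s" for l
      using x by (auto simp: slice_def dyadic_cube_def a_def s_def add_divide_distrib)
    define t where "t l = (x $ l - a l) / h" for l
    have hN: "h * real N = s" using N1 by (simp add: h_def)
    have t0: "0 \<le> t l" for l using xl[of l] hpos by (simp add: t_def)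
    have tN: "t l \<le> real N" for l
    proof -
      have "x $ l - a l \<le> h * real N" using xl[of l] hN by simp
      then show ?thesis using hpos by (simp add: t_def divide_simps mult.commute)
    qed
    have xt: "x $ l = a l + h * t l" for l using hpos by (simp add: t_def)
    define c where "c l = min (nat \<lfloor>t l\<rfloor>) (N - 1)" for l
    define fr where "fr l = t l - real (c l)" for l
    have fr0: "0 \<le> fr l" for l
    proof -
      have "real (nat \<lfloor>t l\<rfloor>) \<le> t l" using t0[of l] by linarith
      then show ?thesis by (simp add: fr_def c_def)
    qed
    have fr1: "fr l \<le> 1" for l
    proof (cases "nat \<lfloor>t l\<rfloor> \<le> N - 1")
      case True
      then have "c l = nat \<lfloor>t l\<rfloor>" by (simp add: c_def)
      moreover have "t l < real (nat \<lfloor>t l\<rfloor>) + 1" using t0[of l] by linarith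
      ultimately show ?thesis by (simp add: fr_def)
    next
      case False
      then have "c l = N - 1" by (simp add: c_def)
      then have "real (c l) = real N - 1" using N1 by simp
      then show ?thesis using tN[of l] by (simp add: fr_def)
    qed
    have cN: "c l < N" for l using N1 by (simp add: c_def)
    define e where "e l = (if fr l \<le> 1/2 then 0 else 1::nat)" for l
    define kc where "kc l = (if l = i then 0 else c l)" for l
    define ke where "ke l = (if l = i then 0 else c l + e l)" for l
    have kcK: "kc \<in> K2" using cN by (auto simp: K2_def kc_def PiE_UNIV_domain)
    have keK: "ke \<in> K1" using cN cN[THEN less_imp_le] by (auto simp: K1_def ke_def e_def PiE_UNIV_domain Suc_leI)
    define S1 where "S1 = (\<Sum>l\<in>UNIV. (x$l - p1 ke $ l)^2)"
    define S2 where "S2 = (\<Sum>l\<in>UNIV. (x$l - p2 kc $ l)^2)"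
    have trm: "(x$l - p1 ke $ l)^2 + (x$l - p2 kc $ l)^2 \<le> (if l = i then 0 else h^2/4)" for l
    proof (cases "l = i")
      case True then show ?thesis by (simp add: p1_def p2_def xi)
    next
      case False
      have d1: "x$l - p1 ke $ l = h * (fr l - real (e l))"
        using False by (simp add: p1_def ke_def xt fr_def algebra_simps)
      have d2: "x$l - p2 kc $ l = h * (fr l - 1/2)"
        using False by (simp add: p2_def kc_def xt fr_def algebra_simps)
      have ee: "real (e l) = (if fr l \<le> 1/2 then 0 else 1)" by (simp add: e_def)
      have "(fr l - 1/2)^2 + (fr l - real (e l))^2 \<le> 1/4"
        using sq_le_quarter[OF fr0 fr1, of l] unfolding ee by simp
      then have hh: "h^2 * ((fr l - 1/2)^2 + (fr l - real (e l))^2) \<le> h^2 * (1/4)"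
        by (intro mult_left_mono) auto
      have "(x$l - p1 ke $ l)^2 + (x$l - p2 kc $ l)^2 = h^2 * ((fr l - 1/2)^2 + (fr l - real (e l))^2)"
        unfolding d1 d2 by (simp add: power_mult_distrib distrib_left)
      then show ?thesis using False hh by simp
    qed
    have "S1 + S2 \<le> (\<Sum>l\<in>UNIV. (if l = i then 0 else h^2/4))"
      unfolding S1_def S2_def sum.distrib[symmetric] by (rule sum_mono) (rule trm)
    also have "\<dots> = (\<Sum>l\<in>UNIV - {i}. h^2/4)"
      by (simp add: sum.If_cases Diff_eq Compl_eq)
    also have "\<dots> = real m * h^2 / 4" by (simp add: card_Diff_singleton m_def)
    finally have S12: "S1 + S2 \<le> real m * h^2 / 4" .
    have R2: "R^2 = real m * h^2 / 8"
      by (simp add: R_def power_mult_distrib power_divide)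
    have S1nn: "S1 \<ge> 0" "S2 \<ge> 0" by (auto simp: S1_def S2_def intro: sum_nonneg)
    have inball: "dist p x \<le> R" if "(\<Sum>l\<in>UNIV. (x$l - p$l)^2) \<le> R^2" for p
    proof -
      have "dist p x = sqrt (\<Sum>l\<in>UNIV. (x$l - p$l)^2)"
        unfolding dist_commute[of p x] by (rule dist_vec_sum)
      also have "\<dots> \<le> sqrt (R^2)" using that by (rule real_sqrt_le_mono)
      also have "\<dots> = R" using Rnn by simp
      finally show ?thesis .
    qed
    have "S1 \<le> R^2 \<or> S2 \<le> R^2" using S12 R2 by linarith
    then have "x \<in> cball (p1 ke) R \<or> x \<in> cball (p2 kc) R"
      using inball[of "p1 ke"] inball[of "p2 kc"] by (auto simp: S1_def S2_def mem_cball)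
    moreover have "cball (p1 ke) R \<in> F" "cball (p2 kc) R \<in> F"
      using keK kcK by (auto simp: F_def P_def)
    ultimately show "x \<in> \<Union>F" by blast
  qed
  have diam: "2 * R \<le> \<delta>"
  proof -
    have hle: "h \<le> 1 / real N" using sle N1 by (simp add: h_def divide_right_mono)
    have "real m / 2 \<le> real m ^ 2" using m1' by (simp add: power2_eq_square)
    then have sq: "sqrt (real m / 2) \<le> real m" using real_sqrt_le_mono[of "real m/2" "(real m)^2"] by simp
    have "2 * R = h * sqrt (real m / 2)" by (simp add: R_def)
    also have "\<dots> \<le> (1 / real N) * real m" using hle sq hpos by (intro mult_mono) auto
    also have "\<dots> = 1 / (16 * real M)" using m1' by (simp add: N_def)
    also have "\<dots> \<le> 1 / real M" using M1 by (simp add: divide_simps)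
    also have "\<dots> < \<delta>" using Mgt \<delta> M1 by (simp add: divide_simps mult.commute)
    finally show ?thesis by simp
  qed
  have Fprop: "\<forall>U\<in>F. bounded U \<and> diameter U \<le> \<delta>" using diam Rnn by (auto simp: F_def)
  define C where "C = hausdorff_const m * (2 * R) ^ m"
  have Cnn: "C \<ge> 0" using hconst_nonneg Rnn by (simp add: C_def)
  have hcF: "hcontrib m U = ennreal C" if "U \<in> F" for U
    using that Rnn by (auto simp: F_def hcontrib_def C_def)
  have cardF: "card F \<le> card K1 + card K2"
  proof -
    have "card F \<le> card P" unfolding F_def using finK1 finK2 by (intro card_image_le) (simp add: P_def)
    also have "\<dots> \<le> card (p1 ` K1) + card (p2 ` K2)" unfolding P_def by (rule card_Un_le)
    also have "\<dots> \<le> card K1 + card K2" using finK1 finK2 by (intro add_mono card_image_le)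
    finally show ?thesis .
  qed
  have "(\<Sum>U\<in>F. hcontrib m U) = (\<Sum>U\<in>F. ennreal C)" using hcF by simp
  also have "\<dots> = ennreal (real (card F) * C)" using Cnn by (simp add: ennreal_mult ennreal_of_nat_eq_real_of_nat)
  also have "\<dots> \<le> ennreal (real (card K1 + card K2) * C)"
    using cardF Cnn by (intro ennreal_leI mult_right_mono) auto
  also have "real (card K1 + card K2) * C \<le> 2 ^ m * s ^ m"
  proof -
    have Npos: "real N > 0" using N1 by simp
    have eq1: "(2 * R) ^ m = s ^ m / real N ^ m * sqrt (real m / 2) ^ m"
      by (simp add: R_def h_def power_mult_distrib power_divide)
    have eq2: "real ((N+1)^m + N^m) / real N ^ m = (1 + 1/real N)^m + 1"
      using Npos by (simp add: add_divide_distrib power_divide[symmetric] add.commute)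
    have "real (card K1 + card K2) * C
        = s ^ m * (hausdorff_const m * sqrt (real m / 2) ^ m) * (real ((N+1)^m + N^m) / real N ^ m)"
      unfolding C_def eq1 cK1 cK2 by (simp add: field_simps)
    also have "\<dots> = s ^ m * (hausdorff_const m * sqrt (real m / 2) ^ m) * ((1 + 1/real N)^m + 1)"
      unfolding eq2 ..
    also have "\<dots> \<le> s ^ m * (hausdorff_const m * sqrt (real m / 2) ^ m) * (31/15)"
      using pow_small[OF N16 m1'] spos hconst_nonneg
      by (intro mult_left_mono mult_nonneg_nonneg) auto
    also have "\<dots> = s ^ m * (hausdorff_const m * sqrt (real m / 2) ^ m * (31/15))" by simp
    also have "\<dots> \<le> s ^ m * 2 ^ m" using key_const[OF m1'] spos by (intro mult_left_mono) auto
    finally show ?thesis by (simp add: mult.commute)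
  qed
  then have "ennreal (real (card K1 + card K2) * C) \<le> ennreal (2 ^ m * s ^ m)" by (rule ennreal_leI)
  finally show ?thesis using finF cover Fprop by (auto simp: m_def s_def)
qed



lemma slice_cover_zero:
  fixes q :: "'n::finite dnode" and i :: 'n
  assumes \<delta>: "\<delta> > 0" and m0: "CARD('n) - 1 = 0"
  shows "\<exists>F. finite F \<and> slice q i \<subseteq> \<Union>F \<and> (\<forall>U\<in>F. bounded U \<and> diameter U \<le> \<delta>) \<and>
    (\<Sum>U\<in>F. hcontrib (CARD('n) - 1) U) \<le> ennreal (2^(CARD('n)-1) * (1/2^fst q)^(CARD('n)-1))"
proof -
  define v :: "real^'n" where "v = (\<chi> _. (real (snd q i) + 1/2) / 2 ^ fst q)"
  have c1: "CARD('n) = 1" using m0 by (simp add: Suc_leI antisym)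
  have all: "l = i" for l :: 'n
  proof -
    have "card (UNIV :: 'n set) = 1" by (rule c1)
    then obtain z where "(UNIV :: 'n set) = {z}" by (rule card_1_singletonE)
    then show ?thesis by (metis UNIV_I singletonD)
  qed
  have sub: "slice q i \<subseteq> \<Union>{{v}}"
  proof
    fix x assume "x \<in> slice q i"
    then have "x $ i = (real (snd q i) + 1/2) / 2 ^ fst q" by (simp add: slice_def)
    then have "x = v" unfolding v_def vec_eq_iff by (metis all vec_lambda_beta)
    then show "x \<in> \<Union>{{v}}" by simp
  qed
  have G1: "Gamma (1::real) = 1" using Gamma_fact[of 0] by simp
  have hc: "hcontrib 0 {v} = 1" by (simp add: hcontrib_def hausdorff_const_def G1)
  show ?thesis
    by (rule exI[of _ "{{v}}"]) (use sub \<delta> hc m0 in auto)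
qed

lemma slice_cover:
  fixes q :: "'n::finite dnode" and i :: 'n
  assumes \<delta>: "\<delta> > 0"
  shows "\<exists>F. finite F \<and> slice q i \<subseteq> \<Union>F \<and> (\<forall>U\<in>F. bounded U \<and> diameter U \<le> \<delta>) \<and>
    (\<Sum>U\<in>F. hcontrib (CARD('n) - 1) U) \<le> ennreal (2^(CARD('n)-1) * (1/2^fst q)^(CARD('n)-1))"
proof (cases "CARD('n) - 1 = 0")
  case True then show ?thesis using slice_cover_zero[OF \<delta> True] by blast
next
  case False then show ?thesis using slice_cover_pos[OF \<delta>, where q=q and i=i] by simp
qed

theorem lemma4:
  fixes T :: "('n::finite) dnode set"
  assumes "proper_subtree T" and "finite T"
  shows "hausdorff_measure (CARD('n) - 1) (common_boundary (outer_leaves T))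
           \<le> ennreal (2 ^ (CARD('n) + 1) * real CARD('n) * real (card T) powr (1 / real CARD('n)))"
proof -
  define m where "m = CARD('n) - 1"
  define d where "d = CARD('n)"
  have dm: "d = m + 1" by (simp add: m_def d_def Suc_leI)
  have Tsub: "T \<subseteq> dyadic_nodes" and Tne: "T \<noteq> {}"
    using assms(1) by (auto simp: proper_subtree_def)
  define B where "B = common_boundary (outer_leaves T)"
  define bound where "bound = 2 ^ (CARD('n) + 1) * real CARD('n) * real (card T) powr (1 / real CARD('n))"
  have main: "hausdorff_pre m \<delta> B \<le> ennreal bound" if \<delta>: "\<delta> > 0" for \<delta>
  proof -
    define Pr where "Pr qi F \<longleftrightarrow> finite F \<and> slice (fst qi) (snd qi) \<subseteq> \<Union>F \<and>
       (\<forall>U\<in>F. bounded U \<and> diameter U \<le> \<delta>) \<and>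
       (\<Sum>U\<in>F. hcontrib m U) \<le> ennreal (2^m * (1/2^fst (fst qi))^m)"
      for qi :: "'n dnode \<times> 'n" and F :: "(real^'n) set set"
    have ex: "\<exists>F. Pr qi F" for qi
      unfolding Pr_def using slice_cover[OF \<delta>, where q="fst qi" and i="snd qi"] by (simp add: m_def)
    define Fs where "Fs qi = (SOME F. Pr qi F)" for qi
    have FsP: "Pr qi (Fs qi)" for qi unfolding Fs_def by (rule someI_ex[OF ex])
    have Fs: "finite (Fs qi) \<and> slice (fst qi) (snd qi) \<subseteq> \<Union>(Fs qi) \<and>
       (\<forall>U\<in>Fs qi. bounded U \<and> diameter U \<le> \<delta>) \<and>
       (\<Sum>U\<in>Fs qi. hcontrib m U) \<le> ennreal (2^m * (1/2^fst (fst qi))^m)" for qi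
      using FsP[of qi] unfolding Pr_def .
    define I where "I = Sigma (T \<times> UNIV) Fs"
    have finTU: "finite (T \<times> (UNIV :: 'n set))" using assms(2) by simp
    have finI: "finite I" unfolding I_def by (rule finite_SigmaI[OF finTU]) (use Fs in blast)
    have cov: "B \<subseteq> (\<Union>p\<in>I. snd p)"
    proof
      fix x assume "x \<in> B"
      then obtain q i where qi: "q \<in> T" "x \<in> slice q i"
        using boundary_in_slices[OF assms(1)] by (auto simp: B_def)
      then obtain U where "U \<in> Fs (q, i)" "x \<in> U" using Fs[of "(q,i)"] by auto
      then show "x \<in> (\<Union>p\<in>I. snd p)" using qi by (auto simp: I_def intro!: bexI[of _ "((q,i),U)"])
    qed
    have "hausdorff_pre m \<delta> B \<le> (\<Sum>p\<in>I. hcontrib m (snd p))"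
      by (rule pre_le_finite[OF finI cov]) (use Fs \<delta> in \<open>auto simp: I_def\<close>)
    also have "\<dots> = (\<Sum>qi\<in>T \<times> UNIV. \<Sum>U\<in>Fs qi. hcontrib m U)"
      unfolding I_def using finTU Fs by (subst sum.Sigma) (auto simp: split_beta)
    also have "\<dots> \<le> (\<Sum>qi\<in>T \<times> (UNIV::'n set). ennreal (2^m * (1/2^fst (fst qi))^m))"
      by (rule sum_mono) (use Fs in blast)
    also have "\<dots> = ennreal (\<Sum>qi\<in>T \<times> (UNIV::'n set). 2^m * (1/2^fst (fst qi))^m)"
      by (rule sum_ennreal) simp
    also have "(\<Sum>qi\<in>T \<times> (UNIV::'n set). 2^m * (1/2^fst (fst qi))^m)
          = real d * 2^m * (\<Sum>q\<in>T. (1/2^fst q :: real)^m)"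
    proof -
      have "(\<Sum>qi\<in>T \<times> (UNIV::'n set). (2::real)^m * (1/2^fst (fst qi))^m)
            = (\<Sum>q\<in>T. \<Sum>i\<in>(UNIV::'n set). (2::real)^m * (1/2^fst q)^m)"
        by (subst sum.cartesian_product) (simp add: split_beta)
      also have "\<dots> = (\<Sum>q\<in>T. real d * (2^m * (1/2^fst q)^m))" by (simp add: d_def)
      also have "\<dots> = real d * 2^m * (\<Sum>q\<in>T. (1/2^fst q :: real)^m)"
        by (simp add: sum_distrib_left mult.assoc)
      finally show ?thesis .
    qed
    also have "real d * 2^m * (\<Sum>q\<in>T. (1/2^fst q :: real)^m) \<le> real d * 2^m * (4 * real (card T) powr (1 / real d))"
      using sum_levels[OF Tsub assms(2) Tne] by (intro mult_left_mono) (auto simp: m_def d_def)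
    also have "\<dots> = bound" by (simp add: bound_def d_def[symmetric] dm power_add)
    finally show ?thesis by (simp add: ennreal_leI)
  qed
  have "hausdorff_measure m B \<le> ennreal bound"
    unfolding hausdorff_measure_def by (rule SUP_least) (use main in auto)
  then show ?thesis by (simp add: m_def B_def bound_def)
qed

end
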